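(* Let $\lambda<\kappa$ be cardinals (with $\lambda\ge1$) and let $(S,\mu)$ be a multisemigroup with multiplicities bounded by $\kappa$. Let $\Phi_{\lambda,\kappa}:\mathrm{Card}_\kappa\to\mathrm{Card}_\lambda$ be defined by $\Phi_{\lambda,\kappa}(\nu)=\nu$ if $\nu\le\lambda$ and $\Phi_{\lambda,\kappa}(\nu)=\lambda$ otherwise. Then $(S,\Phi_{\lambda,\kappa}\circ\mu)$ (meaning $(s,t)\mapsto\Phi_{\lambda,\kappa}\circ\mu_{s,t}$) is a multisemigroup with multiplicities bounded by $\lambda$.
   Context: For a cardinal $\kappa\ge1$, $\mathrm{Card}_\kappa$ denotes the complete semiring of all cardinals $\le\kappa$, with sum of arbitrary families given by cardinal sum and product by cardinal product, every cardinal greater than $\kappa$ being identified with $\kappa$. $\mathcal{B}_\kappa(S)$ is the set of functions $S\to\mathrm{Card}_\kappa$. For a cardinal $\lambda'$ and $\nu\in\mathcal{B}_\kappa(S)$, $\lambda'\nu$ is the pointwise sum of $\lambda'$ copies of $\nu$. A multisemigroup with multiplicities bounded by $\kappa$ is a pair $(S,\mu)$, $S$ a non-empty set and $\mu:S\times S\to\mathcal{B}_\kappa(S)$, $(s,t)\mapsto\mu_{s,t}$, such that for all $r,s,t\in S$: $\sum_{i\in S}\mu_{s,t}(i)\mu_{r,i}=\sum_{j\in S}\mu_{r,s}(j)\mu_{j,t}$ (computed in $\mathcal{B}_\kappa(S)$). *)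

theory Defs
  imports "HOL-Library.Equipollence"
begin

text \<open>Cardinals are represented by sets (of some type 'k) up to equipollence.
  The cardinal kappa is represented by a set K; Card_kappa consists of (the
  cardinalities of) sets X with X lepoll K.  Every cardinal greater than kappa
  is identified with kappa, i.e. represented by K itself.\<close>

definition trunc :: "'k set \<Rightarrow> 'b set \<Rightarrow> 'k set" where
  "trunc K X = (if X \<lesssim> K then (SOME B. B \<subseteq> K \<and> B \<approx> X) else K)"

definition cprod :: "'k set \<Rightarrow> 'k set \<Rightarrow> 'k set \<Rightarrow> 'k set" where
  "cprod K A B = trunc K (A \<times> B)"

definition csum :: "'k set \<Rightarrow> 'i set \<Rightarrow> ('i \<Rightarrow> 'k set) \<Rightarrow> 'k set" where
  "csum K I f = trunc K (SIGMA i:I. f i)"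

text \<open>Multisemigroup with multiplicities bounded by kappa (represented by K).
  mu s t is the function mu_{s,t} : S -> Card_kappa.  The associativity axiom is
  checked pointwise at every x in S; (lambda' nu)(x) = lambda' * nu(x) in Card_kappa.\<close>
definition multisemigroup :: "'k set \<Rightarrow> 'a set \<Rightarrow> ('a \<Rightarrow> 'a \<Rightarrow> 'a \<Rightarrow> 'k set) \<Rightarrow> bool" where
  "multisemigroup K S \<mu> \<longleftrightarrow>
     K \<noteq> {} \<and> S \<noteq> {} \<and>
     (\<forall>s\<in>S. \<forall>t\<in>S. \<forall>i\<in>S. \<mu> s t i \<lesssim> K) \<and>
     (\<forall>r\<in>S. \<forall>s\<in>S. \<forall>t\<in>S. \<forall>x\<in>S.
        csum K S (\<lambda>i. cprod K (\<mu> s t i) (\<mu> r i x))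
          \<approx> csum K S (\<lambda>j. cprod K (\<mu> r s j) (\<mu> j t x)))"

definition Phi :: "'k set \<Rightarrow> 'k set \<Rightarrow> 'k set" where
  "Phi L A = (if A \<lesssim> L then A else L)"

end

theory Submission
  imports Defs
begin

lemma lepoll_total: "A \<lesssim> B \<or> B \<lesssim> A"
  by (metis card_of_Well_order card_of_ordLeq lepoll_def ordLeq_total)

lemma trunc_le: "X \<lesssim> L \<Longrightarrow> trunc L X \<subseteq> L \<and> trunc L X \<approx> X"
proof -
  assume a: "X \<lesssim> L"
  then obtain f where "inj_on f X" "f ` X \<subseteq> L" by (auto simp: lepoll_def)
  then have "\<exists>B. B \<subseteq> L \<and> B \<approx> X"
    by (metis eqpoll_sym inj_on_image_eqpoll_self)
  then have "(SOME B. B \<subseteq> L \<and> B \<approx> X) \<subseteq> L \<and> (SOME B. B \<subseteq> L \<and> B \<approx> X) \<approx> X"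
    by (rule someI_ex)
  then show ?thesis using a unfolding trunc_def by simp
qed

lemma trunc_gt: "\<not> X \<lesssim> L \<Longrightarrow> trunc L X = L"
  by (simp add: trunc_def)

lemma trunc_lepoll: "trunc L X \<lesssim> L"
  by (metis trunc_le trunc_gt subset_imp_lepoll lepoll_refl)

definition EqL :: "'k set \<Rightarrow> 'b set \<Rightarrow> 'c set \<Rightarrow> bool" where
  "EqL L X Y \<longleftrightarrow> (X \<lesssim> L \<and> Y \<lesssim> L \<and> X \<approx> Y) \<or> (L \<lesssim> X \<and> L \<lesssim> Y)"

lemma EqL_sym: "EqL L X Y \<Longrightarrow> EqL L Y X"
  unfolding EqL_def using eqpoll_sym by blast

lemma EqL_trans [trans]: "EqL L X Y \<Longrightarrow> EqL L Y Z \<Longrightarrow> EqL L X Z"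
  unfolding EqL_def
  by (meson eqpoll_trans eqpoll_imp_lepoll eqpoll_sym lepoll_trans lepoll_trans1 lepoll_trans2
      lepoll_antisym)

lemma eq_EqL: "X \<approx> Y \<Longrightarrow> EqL L X Y"
  unfolding EqL_def
  by (meson eqpoll_sym lepoll_total lepoll_trans1 lepoll_trans2)

lemma EqL_trunc: "EqL L X (trunc L X)"
proof (cases "X \<lesssim> L")
  case True then show ?thesis using trunc_le eq_EqL eqpoll_sym by blast
next
  case False then show ?thesis using trunc_gt lepoll_total unfolding EqL_def by metis
qed

lemma EqL_Phi: "EqL L X (Phi L X)"
  using EqL_trunc[of L X] by (simp add: Phi_def trunc_def EqL_def split: if_splits)

lemma EqL_truncK: "L \<prec> K \<Longrightarrow> EqL L X (trunc K X)"
proof (cases "X \<lesssim> K")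
  case True then show ?thesis using trunc_le eq_EqL eqpoll_sym by blast
next
  case False
  assume "L \<prec> K"
  then have LK: "L \<lesssim> K" by (simp add: lesspoll_def)
  have "L \<lesssim> X" using False LK lepoll_total lepoll_trans by metis
  then show ?thesis using False trunc_gt LK unfolding EqL_def by metis
qed

lemma ne_of_lepoll: "L \<noteq> {} \<Longrightarrow> L \<lesssim> X \<Longrightarrow> X \<noteq> {}"
  by auto

lemma EqL_empty: "L \<noteq> {} \<Longrightarrow> EqL L X Y \<Longrightarrow> X = {} \<longleftrightarrow> Y = {}"
  unfolding EqL_def
proof (elim disjE conjE)
  assume XY: "X \<approx> Y"
  then have YX: "Y \<approx> X" by (rule eqpoll_sym)
  show "X = {} \<longleftrightarrow> Y = {}"
  proof
    assume "X = {}" then show "Y = {}" using YX by simp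
  next
    assume "Y = {}" then show "X = {}" using XY by simp
  qed
next
  assume "L \<noteq> {}" "L \<lesssim> X" "L \<lesssim> Y"
  then show "X = {} \<longleftrightarrow> Y = {}" by auto
qed

lemma EqL_times:
  assumes L: "L \<noteq> {}" and a: "EqL L A A'" and b: "EqL L B B'"
  shows "EqL L (A \<times> B) (A' \<times> B')"
proof (cases "A \<approx> A' \<and> B \<approx> B'")
  case True then show ?thesis by (simp add: eq_EqL times_eqpoll_cong)
next
  case False
  then have h: "(L \<lesssim> A \<and> L \<lesssim> A') \<or> (L \<lesssim> B \<and> L \<lesssim> B')"
    using a b unfolding EqL_def by blast
  have ea: "A = {} \<longleftrightarrow> A' = {}" by (rule EqL_empty[OF L a])
  have eb: "B = {} \<longleftrightarrow> B' = {}" by (rule EqL_empty[OF L b])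
  show ?thesis
  proof (cases "A = {} \<or> B = {}")
    case True
    have e1: "A \<times> B = {}" using True by auto
    have e2: "A' \<times> B' = {}" using True ea eb by auto
    show ?thesis unfolding e1 e2 by (rule eq_EqL) simp
  next
    case False
    then have ne: "A \<noteq> {}" "B \<noteq> {}" "A' \<noteq> {}" "B' \<noteq> {}" using ea eb by auto
    have "L \<lesssim> A \<times> B \<and> L \<lesssim> A' \<times> B'"
    proof (cases "L \<lesssim> A \<and> L \<lesssim> A'")
      case True
      then show ?thesis
        using lepoll_trans[OF _ lepoll_times1[OF ne(2)]] lepoll_trans[OF _ lepoll_times1[OF ne(4)]]
        by blast
    next
      case False
      then have "L \<lesssim> B \<and> L \<lesssim> B'" using h by blast
      then show ?thesis
        using lepoll_trans[OF _ lepoll_times2[OF ne(1)]] lepoll_trans[OF _ lepoll_times2[OF ne(3)]]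
        by blast
    qed
    then show ?thesis unfolding EqL_def by blast
  qed
qed

lemma EqL_Sigma:
  assumes "\<And>i. i \<in> I \<Longrightarrow> EqL L (A i) (B i)"
  shows "EqL L (Sigma I A) (Sigma I B)"
proof (cases "\<exists>i\<in>I. L \<lesssim> A i \<and> L \<lesssim> B i")
  case True
  then obtain i where i: "i \<in> I" "L \<lesssim> A i" "L \<lesssim> B i" by blast
  have "\<And>C. C i \<lesssim> Sigma I C"
  proof -
    fix C
    have "C i \<approx> {i} \<times> C i" by (simp add: eqpoll_sym times_singleton_eqpoll)
    moreover have "{i} \<times> C i \<lesssim> Sigma I C" using i(1) by (intro subset_imp_lepoll) auto
    ultimately show "C i \<lesssim> Sigma I C" by (rule lepoll_trans1)
  qed
  then show ?thesis using i unfolding EqL_def by (meson lepoll_trans)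
next
  case False
  then have "\<And>i. i \<in> I \<Longrightarrow> A i \<approx> B i" using assms unfolding EqL_def by blast
  then have "Sigma I A \<approx> Sigma I B" by (intro Sigma_eqpoll_cong[where h=id]) auto
  then show ?thesis by (rule eq_EqL)
qed

lemma EqL_final: "EqL L X Y \<Longrightarrow> X \<lesssim> L \<Longrightarrow> Y \<lesssim> L \<Longrightarrow> X \<approx> Y"
  unfolding EqL_def by (meson eqpoll_sym eqpoll_trans lepoll_antisym)

lemma ms_assoc: "multisemigroup K S \<mu> \<Longrightarrow> r\<in>S \<Longrightarrow> s\<in>S \<Longrightarrow> t\<in>S \<Longrightarrow> x\<in>S \<Longrightarrow>
  csum K S (\<lambda>i. cprod K (\<mu> s t i) (\<mu> r i x)) \<approx> csum K S (\<lambda>j. cprod K (\<mu> r s j) (\<mu> j t x))"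
  unfolding multisemigroup_def by blast
lemma ms_ne: "multisemigroup K S \<mu> \<Longrightarrow> S \<noteq> {}"
  unfolding multisemigroup_def by blast

theorem proposition11:
  fixes K L :: "'k set" and S :: "'a set" and \<mu> :: "'a \<Rightarrow> 'a \<Rightarrow> 'a \<Rightarrow> 'k set"
  assumes "L \<noteq> {}" and "L \<prec> K" and "multisemigroup K S \<mu>"
  shows "multisemigroup L S (\<lambda>s t i. Phi L (\<mu> s t i))"
proof -
  have key: "EqL L (csum L S (\<lambda>i. cprod L (Phi L (a i)) (Phi L (b i))))
                   (csum K S (\<lambda>i. cprod K (a i) (b i)))" for a b :: "'a \<Rightarrow> 'k set"
  proof -
    have "EqL L (csum L S (\<lambda>i. cprod L (Phi L (a i)) (Phi L (b i))))
                (SIGMA i:S. cprod L (Phi L (a i)) (Phi L (b i)))"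
      unfolding csum_def by (rule EqL_sym, rule EqL_trunc)
    also have "EqL L (SIGMA i:S. cprod L (Phi L (a i)) (Phi L (b i))) (SIGMA i:S. a i \<times> b i)"
    proof (rule EqL_Sigma)
      fix i
      have "EqL L (Phi L (a i) \<times> Phi L (b i)) (a i \<times> b i)"
        by (rule EqL_times[OF assms(1)]) (auto intro: EqL_sym EqL_Phi)
      then show "EqL L (cprod L (Phi L (a i)) (Phi L (b i))) (a i \<times> b i)"
        unfolding cprod_def by (rule EqL_trans[OF EqL_sym[OF EqL_trunc]])
    qed
    also have "EqL L (SIGMA i:S. a i \<times> b i) (SIGMA i:S. cprod K (a i) (b i))"
      unfolding cprod_def by (rule EqL_Sigma, rule EqL_truncK[OF assms(2)])
    also have "EqL L (SIGMA i:S. cprod K (a i) (b i)) (csum K S (\<lambda>i. cprod K (a i) (b i)))"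
      unfolding csum_def by (rule EqL_truncK[OF assms(2)])
    finally show ?thesis .
  qed
  show ?thesis
    unfolding multisemigroup_def
  proof (intro conjI ballI)
    show "L \<noteq> {}" by fact
    show "S \<noteq> {}" by (rule ms_ne[OF assms(3)])
    fix s t i assume "s \<in> S" "t \<in> S" "i \<in> S"
    show "Phi L (\<mu> s t i) \<lesssim> L" by (simp add: Phi_def)
  next
    fix r s t x assume "r \<in> S" "s \<in> S" "t \<in> S" "x \<in> S"
    have h: "csum K S (\<lambda>i. cprod K (\<mu> s t i) (\<mu> r i x))
          \<approx> csum K S (\<lambda>j. cprod K (\<mu> r s j) (\<mu> j t x))"
      by (rule ms_assoc[OF assms(3) \<open>r \<in> S\<close> \<open>s \<in> S\<close> \<open>t \<in> S\<close> \<open>x \<in> S\<close>])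
    have "EqL L (csum L S (\<lambda>i. cprod L (Phi L (\<mu> s t i)) (Phi L (\<mu> r i x))))
                (csum L S (\<lambda>j. cprod L (Phi L (\<mu> r s j)) (Phi L (\<mu> j t x))))"
      by (rule EqL_trans[OF key[of "\<lambda>i. \<mu> s t i" "\<lambda>i. \<mu> r i x"]
           EqL_trans[OF eq_EqL[OF h] EqL_sym[OF key[of "\<lambda>j. \<mu> r s j" "\<lambda>j. \<mu> j t x"]]]])
    then show "csum L S (\<lambda>i. cprod L (Phi L (\<mu> s t i)) (Phi L (\<mu> r i x)))
          \<approx> csum L S (\<lambda>j. cprod L (Phi L (\<mu> r s j)) (Phi L (\<mu> j t x)))"
      unfolding csum_def by (rule EqL_final[unfolded csum_def]) (rule trunc_lepoll)+
  qed
qed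

end
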